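(* Let $F,G$ be finitely supported sequences on $\mathbb{Z}$ with values in $\mathbb{D}$, with $\operatorname{supp}F\subset(-\infty,N_1]$, $\operatorname{supp}G\subset[-N_2,\infty)$, and let $N>N_1+N_2$. Then for every $M\geqslant -N_2$: $$\mathfrak{a}^{( * )}(z,F+(G^{\leqslant M})_{\to N})=\mathfrak{a}^{( * )}(z,F)\mathfrak{a}^{( * )}(z,G^{\leqslant M})+z^N\mathfrak{b}^{( * )}(z,F)\mathfrak{b}(z,G^{\leqslant M}),$$ $$\mathfrak{b}(z,F+(G^{\leqslant M})_{\to N})=z^N\mathfrak{b}(z,G^{\leqslant M})\mathfrak{a}(z,F)+\mathfrak{b}(z,F)\mathfrak{a}^{( * )}(z,G^{\leqslant M}),$$ and, for $z\in\mathbb{T}$, $$|\mathfrak{r}(z,F+(G^{\leqslant M})_{\to N})-\mathfrak{r}(z,F)|\leqslant\frac{|\mathfrak{r}(z,G^{\leqslant M})|}{1-|\mathfrak{r}(z,G^{\leqslant M})|}.$$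
   Context: $\mathbb{T}$, $\mathbb{D}$ denote the unit circle and open unit disc. For a sequence $H$ on $\mathbb{Z}$ and $M,N\in\mathbb{Z}$: $(H_{\to N})_n=H_{n-N}$ and $H^{\leqslant M}=H\chi_{n\leqslant M}$. For a finitely supported sequence $G$ with values in $\mathbb{D}$: let $\widetilde X_n(z)=I$ for $n$ below the support and $\widetilde X_n=(1-|G_n|^2)^{-1/2}\begin{pmatrix}1&\overline{G_n}z^{-n}\\ G_nz^n&1\end{pmatrix}\widetilde X_{n-1}$; for $n$ above the support $\widetilde X_n=\begin{pmatrix}\mathfrak{a}(z,G)&\mathfrak{b}^{( * )}(z,G)\\ \mathfrak{b}(z,G)&\mathfrak{a}^{( * )}(z,G)\end{pmatrix}$, where $f^{( * )}(z)=\overline{f(\bar z^{-1})}$. Also $\mathfrak{r}(z,G)=\mathfrak{b}(z,G)/\mathfrak{a}^{( * )}(z,G)$. *)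

theory Defs
  imports "HOL-Analysis.Analysis"
begin

definition supp_seq :: "(int \<Rightarrow> complex) \<Rightarrow> int set" where
  "supp_seq H = {n. H n \<noteq> 0}"

definition shift_seq :: "(int \<Rightarrow> complex) \<Rightarrow> int \<Rightarrow> (int \<Rightarrow> complex)" where
  "shift_seq H N = (\<lambda>n. H (n - N))"

definition trunc_seq :: "(int \<Rightarrow> complex) \<Rightarrow> int \<Rightarrow> (int \<Rightarrow> complex)" where
  "trunc_seq H M = (\<lambda>n. if n \<le> M then H n else 0)"

definition step_mat :: "(int \<Rightarrow> complex) \<Rightarrow> complex \<Rightarrow> int \<Rightarrow> complex^2^2" where
  "step_mat G z n =
     (1 / sqrt (1 - (cmod (G n))\<^sup>2)) *\<^sub>R
       vector [vector [1, cnj (G n) * z powi (-n)], vector [G n * z powi n, 1]]"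

text \<open>Product step(hi) ** ... ** step(lo) (i.e. X_hi when X_(lo-1) = I).\<close>
definition transfer_on :: "(int \<Rightarrow> complex) \<Rightarrow> complex \<Rightarrow> int \<Rightarrow> int \<Rightarrow> complex^2^2" where
  "transfer_on G z lo hi = foldl (\<lambda>A k. step_mat G z k ** A) (mat 1) [lo..hi]"

text \<open>The matrix X_n for n above the (finite) support.\<close>
definition transfer :: "(int \<Rightarrow> complex) \<Rightarrow> complex \<Rightarrow> complex^2^2" where
  "transfer G z = (if supp_seq G = {} then mat 1
                   else transfer_on G z (Min (supp_seq G)) (Max (supp_seq G)))"

definition frak_a :: "complex \<Rightarrow> (int \<Rightarrow> complex) \<Rightarrow> complex" where
  "frak_a z G = transfer G z $ 1 $ 1"

definition frak_b :: "complex \<Rightarrow> (int \<Rightarrow> complex) \<Rightarrow> complex" where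
  "frak_b z G = transfer G z $ 2 $ 1"

definition frak_a_star :: "complex \<Rightarrow> (int \<Rightarrow> complex) \<Rightarrow> complex" where
  "frak_a_star z G = cnj (frak_a (1 / cnj z) G)"

definition frak_b_star :: "complex \<Rightarrow> (int \<Rightarrow> complex) \<Rightarrow> complex" where
  "frak_b_star z G = cnj (frak_b (1 / cnj z) G)"

definition frak_r :: "complex \<Rightarrow> (int \<Rightarrow> complex) \<Rightarrow> complex" where
  "frak_r z G = frak_b z G / frak_a_star z G"

end

theory Submission imports Defs begin

lemma mat2_eq: "(A::complex^2^2) = B \<longleftrightarrow> A$1$1=B$1$1 \<and> A$1$2=B$1$2 \<and> A$2$1=B$2$1 \<and> A$2$2=B$2$2"
  by (simp add: vec_eq_iff forall_2)

lemma mult2: "((A::complex^2^2)**B)$i$j = A$i$1*B$1$j + A$i$2*B$2$j"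
  by (simp add: matrix_matrix_mult_def sum_2)

lemma mat1_entries: "(mat 1::complex^2^2)$1$1 = 1" "(mat 1::complex^2^2)$1$2 = 0"
  "(mat 1::complex^2^2)$2$1 = 0" "(mat 1::complex^2^2)$2$2 = 1"
  by (simp_all add: mat_def)

definition sc :: "(int \<Rightarrow> complex) \<Rightarrow> int \<Rightarrow> complex" where
  "sc G n = complex_of_real (1 / sqrt (1 - (cmod (G n))\<^sup>2))"

lemma step_entries:
  "step_mat G z n $1$1 = sc G n"
  "step_mat G z n $1$2 = sc G n * (cnj (G n) * z powi (-n))"
  "step_mat G z n $2$1 = sc G n * (G n * z powi n)"
  "step_mat G z n $2$2 = sc G n"
  unfolding step_mat_def sc_def by (simp_all only: vector_scaleR_component; simp add: scaleR_conv_of_real)+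

lemma foldl_gen: "foldl (\<lambda>A k. step_mat G z k ** A) (B::complex^2^2) xs = foldl (\<lambda>A k. step_mat G z k ** A) (mat 1) xs ** B"
proof (induction xs arbitrary: B)
  case Nil then show ?case by simp
next
  case (Cons x xs)
  show ?case using Cons[of "step_mat G z x ** B"] Cons[of "step_mat G z x"]
    by (simp add: matrix_mul_assoc)
qed



lemma transfer_on_split: assumes "lo - 1 \<le> m" "m \<le> hi"
  shows "transfer_on G z lo hi = transfer_on G z (m+1) hi ** transfer_on G z lo m"
proof -
  have sp: "[lo..hi] = [lo..m] @ [m+1..hi]"
  proof (cases "m = hi")
    case True then show ?thesis by simp
  next
    case False then have h1: "m+1 \<le> hi" using assms by simp
    have h2: "lo \<le> m + 1" using assms by simp
    have "[lo..hi] = [lo..m+1-1] @ [m+1..hi]" by (rule upto_split1[OF h2 h1])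
    then show ?thesis by (simp only: add_diff_cancel_right')
  qed
  show ?thesis unfolding transfer_on_def foldl_append sp
    by (rule foldl_gen)
qed

lemma transfer_on_cong: "(\<And>k. lo \<le> k \<Longrightarrow> k \<le> hi \<Longrightarrow> G k = G' k) \<Longrightarrow> transfer_on G z lo hi = transfer_on G' z lo hi"
  unfolding transfer_on_def step_mat_def by (intro foldl_cong) auto

lemma step_zero: "G n = 0 \<Longrightarrow> step_mat G z n = mat 1"
  by (simp add: mat2_eq step_entries sc_def mat1_entries)

lemma transfer_on_zero: "(\<And>k. lo \<le> k \<Longrightarrow> k \<le> hi \<Longrightarrow> G k = 0) \<Longrightarrow> transfer_on G z lo hi = mat 1"
proof -
  assume h: "\<And>k. lo \<le> k \<Longrightarrow> k \<le> hi \<Longrightarrow> G k = 0"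
  have "transfer_on G z lo hi = transfer_on (\<lambda>_. 0) z lo hi" by (rule transfer_on_cong) (simp add: h)
  also have "\<dots> = mat 1" unfolding transfer_on_def
  proof -
    have "\<And>B. foldl (\<lambda>A k. step_mat (\<lambda>_. 0) z k ** A) B xs = B" for xs
      by (induction xs) (auto simp: step_zero)
    then show "foldl (\<lambda>A k. step_mat (\<lambda>_. 0) z k ** A) (mat 1) [lo..hi] = mat 1" by blast
  qed
  finally show ?thesis .
qed


definition fo :: "(int \<Rightarrow> complex) \<Rightarrow> complex \<Rightarrow> int list \<Rightarrow> complex^2^2" where
  "fo G z xs = foldl (\<lambda>A k. step_mat G z k ** A) (mat 1) xs"

lemma fo_Nil: "fo G z [] = mat 1" by (simp add: fo_def)
lemma fo_snoc: "fo G z (xs@[x]) = step_mat G z x ** fo G z xs" by (simp add: fo_def)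
lemma transfer_on_fo: "transfer_on G z lo hi = fo G z [lo..hi]" by (simp add: fo_def transfer_on_def)

lemma upto_shift: "[lo+N..hi+N] = map (\<lambda>k. k+N) [lo..hi]"
proof (induction lo hi rule: upto.induct)
  case (1 i j)
  show ?case
    apply (subst (1 2) upto.simps)
    using 1 by (simp add: algebra_simps)
qed

definition dmat :: "complex \<Rightarrow> int \<Rightarrow> complex^2^2" where
  "dmat z N = vector [vector [1, 0], vector [0, z powi N]]"

lemma dmat_entries: "dmat z N $1$1 = 1" "dmat z N $1$2 = 0" "dmat z N $2$1 = 0" "dmat z N $2$2 = z powi N"
  by (simp_all add: dmat_def)

lemma step_shift: assumes "z \<noteq> 0"
  shows "step_mat (shift_seq H N) z (k+N) = dmat z N ** step_mat H z k ** dmat z (-N)"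
proof -
  have e: "z powi (- N - k) = inverse (z powi N) * inverse (z powi k)"
    using assms power_int_add[of z "-N" "-k"] by (simp add: power_int_minus)
  have e2: "z powi (N + k) = z powi N * z powi k"
    using assms power_int_add[of z "N" "k"] by simp
  show ?thesis
  using assms by (simp add: mat2_eq mult2 step_entries dmat_entries shift_seq_def sc_def e e2 power_int_minus field_simps)
qed

lemma fo_shift: assumes "z \<noteq> 0"
  shows "fo (shift_seq H N) z (map (\<lambda>k. k+N) xs) = dmat z N ** fo H z xs ** dmat z (-N)"
proof (induction xs rule: rev_induct)
  case Nil
  show ?case using assms by (simp add: fo_Nil mat2_eq mult2 dmat_entries mat1_entries power_int_minus)
next
  case (snoc x xs)
  have "fo (shift_seq H N) z (map (\<lambda>k. k+N) (xs@[x])) = step_mat (shift_seq H N) z (x+N) ** (dmat z N ** fo H z xs ** dmat z (-N))"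
    by (simp add: fo_snoc snoc)
  also have "\<dots> = dmat z N ** step_mat H z x ** (dmat z (-N) ** dmat z N) ** fo H z xs ** dmat z (-N)"
    by (simp add: step_shift[OF assms] matrix_mul_assoc)
  also have "dmat z (-N) ** dmat z N = mat 1"
    using assms by (simp add: mat2_eq mult2 dmat_entries mat1_entries power_int_minus)
  finally show ?case by (simp add: fo_snoc matrix_mul_assoc)
qed

lemma inv_powi: "(1 / (z::complex)) powi k = inverse (z powi k)"
  by (simp add: power_int_inverse flip: inverse_eq_divide)

lemma step_sym: assumes "z \<noteq> 0"
  shows "step_mat H z k $2$2 = cnj (step_mat H (1 / cnj z) k $1$1)"
    "step_mat H z k $2$1 = cnj (step_mat H (1 / cnj z) k $1$2)"
    "step_mat H z k $1$2 = cnj (step_mat H (1 / cnj z) k $2$1)"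
    "step_mat H z k $1$1 = cnj (step_mat H (1 / cnj z) k $2$2)"
  using assms by (simp_all add: step_entries sc_def complex_cnj_power_int power_int_minus inv_powi)

lemma fo_sym: assumes "z \<noteq> 0"
  shows "fo H z xs $2$2 = cnj (fo H (1 / cnj z) xs $1$1) \<and>
    fo H z xs $2$1 = cnj (fo H (1 / cnj z) xs $1$2) \<and>
    fo H z xs $1$2 = cnj (fo H (1 / cnj z) xs $2$1) \<and>
    fo H z xs $1$1 = cnj (fo H (1 / cnj z) xs $2$2)"
proof (induction xs rule: rev_induct)
  case Nil
  show ?case by (simp add: fo_Nil mat1_entries)
next
  case (snoc x xs)
  then show ?case by (simp add: fo_snoc mult2 step_sym[OF assms])
qed

lemma fo_det: assumes "\<forall>n. cmod (H n) < 1" and z: "z \<noteq> 0"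
  shows "fo H z xs $1$1 * fo H z xs $2$2 - fo H z xs $1$2 * fo H z xs $2$1 = 1"
proof (induction xs rule: rev_induct)
  case Nil
  show ?case by (simp add: fo_Nil mat1_entries)
next
  case (snoc x xs)
  have sdet: "step_mat H z x $1$1 * step_mat H z x $2$2 - step_mat H z x $1$2 * step_mat H z x $2$1 = 1"
  proof -
    have lt: "(cmod (H x))\<^sup>2 < 1" using assms(1) by (metis abs_norm_cancel abs_square_less_1)
    have r: "(1 / sqrt (1 - (cmod (H x))\<^sup>2)) * (1 / sqrt (1 - (cmod (H x))\<^sup>2)) = 1 / (1 - (cmod (H x))\<^sup>2)"
      using lt by (simp add: real_sqrt_mult_self)
    have "sc H x * sc H x = complex_of_real (1 / (1 - (cmod (H x))\<^sup>2))"
      unfolding sc_def of_real_mult[symmetric] r ..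
    moreover have "cnj (H x) * H x = complex_of_real ((cmod (H x))\<^sup>2)"
      by (metis complex_norm_square mult.commute of_real_power)
    moreover have "z powi (-x) * z powi x = 1" using z by (simp add: power_int_minus)
    moreover have "complex_of_real (1 / (1 - (cmod (H x))\<^sup>2)) * (1 - complex_of_real ((cmod (H x))\<^sup>2)) = 1"
    proof -
      have "(1 / (1 - (cmod (H x))\<^sup>2)) * (1 - (cmod (H x))\<^sup>2) = (1::real)" using lt by simp
      then show ?thesis by (metis of_real_1 of_real_diff of_real_mult)
    qed
    moreover have "sc H x * sc H x - sc H x * (cnj (H x) * z powi - x) * (sc H x * (H x * z powi x))
       = (sc H x * sc H x) * (1 - (cnj (H x) * H x) * (z powi (-x) * z powi x))" by (simp add: algebra_simps)
    ultimately show ?thesis unfolding step_entries by simp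
  qed
  have dm: "\<And>a b c d e f g h::complex. (a*e + b*g)*(c*f + d*h) - (a*f + b*h)*(c*e + d*g) = (a*d - b*c)*(e*h - f*g)"
    by (simp add: algebra_simps)
  show ?case unfolding fo_snoc mult2 dm using snoc sdet by simp
qed


lemma key_ineq:
  fixes x y p q Aa :: real
  assumes hx: "x^2 = 1 + y^2" and hp: "p^2 = 1 + q^2" and x0: "x \<ge> 0" and y0: "y \<ge> 0" and p0: "p \<ge> 0" and q0: "q \<ge> 0"
    and hA: "Aa \<ge> x*p - y*q"
  shows "q / (Aa * x) \<le> (q/p) / (1 - q/p)"
proof -
  have xy: "x > y" proof -
    have "y^2 < x^2" using hx by simp
    then show ?thesis using x0 y0 power_less_imp_less_base by blast
  qed
  have pq: "p > q" proof -
    have "q^2 < p^2" using hp by simp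
    then show ?thesis using p0 q0 power_less_imp_less_base by blast
  qed
  have pos: "x*p - y*q > 0"
  proof -
    have "x*p - y*q = (x-y)*p + y*(p-q)" by (simp add: algebra_simps)
    moreover have "(x-y)*p > 0" using xy pq q0 by simp
    moreover have "y*(p-q) \<ge> 0" using y0 pq by simp
    ultimately show ?thesis by linarith
  qed
  have e: "x*(x*p - y*q) - (p - q) - (y^2*(p - q) + q*x*(x-y)) = (x^2 - 1 - y^2)*(p-q)"
    by (simp add: algebra_simps power2_eq_square)
  have z: "x^2 - 1 - y^2 = 0" using hx by simp
  have n1: "y^2*(p - q) \<ge> 0" using pq by simp
  have n2: "q*x*(x-y) \<ge> 0" using q0 x0 xy by simp
  have ineq: "x*(x*p - y*q) \<ge> p - q" using e z n1 n2 by simp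
  have "Aa * x \<ge> (x*p - y*q) * x" using hA x0 by (rule mult_right_mono)
  then have big: "Aa * x \<ge> p - q" using ineq by (simp add: mult.commute)
  have "q / (Aa * x) \<le> q / (p - q)"
    by (rule divide_left_mono) (use big pq q0 in auto)
  also have "q / (p - q) = (q/p) / (1 - q/p)" using pq q0 by (simp add: field_simps)
  finally show ?thesis .
qed

definition LL :: "(int \<Rightarrow> complex) \<Rightarrow> int list" where
  "LL G = (if supp_seq G = {} then [] else [Min (supp_seq G)..Max (supp_seq G)])"

lemma transfer_fo: "transfer G z = fo G z (LL G)"
  by (simp add: transfer_def LL_def fo_Nil transfer_on_fo)

lemma transfer_eq: assumes fin: "finite (supp_seq G)" and sub: "supp_seq G \<subseteq> {lo..hi}"
  shows "transfer G z = transfer_on G z lo hi"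
proof (cases "supp_seq G = {}")
  case True
  then show ?thesis by (simp add: transfer_def supp_seq_def transfer_on_zero)
next
  case False
  define mn where "mn = Min (supp_seq G)"
  define mx where "mx = Max (supp_seq G)"
  have mnin: "mn \<in> supp_seq G" using fin False mn_def by simp
  have mxin: "mx \<in> supp_seq G" using fin False mx_def by simp
  have mnle: "\<And>k. k \<in> supp_seq G \<Longrightarrow> mn \<le> k" using fin mn_def by simp
  have mxge: "\<And>k. k \<in> supp_seq G \<Longrightarrow> k \<le> mx" using fin mx_def by simp
  have b: "lo \<le> mn" "mn \<le> mx" "mx \<le> hi" using sub mnin mxin mnle by auto
  have "transfer_on G z lo hi = transfer_on G z (mx+1) hi ** transfer_on G z lo mx"
    using b by (intro transfer_on_split) auto
  also have "transfer_on G z (mx+1) hi = mat 1"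
    by (rule transfer_on_zero) (use mxge in \<open>force simp: supp_seq_def\<close>)
  also have "transfer_on G z lo mx = transfer_on G z (mn - 1 + 1) mx ** transfer_on G z lo (mn - 1)"
    using b by (intro transfer_on_split) auto
  also have "transfer_on G z lo (mn - 1) = mat 1"
    by (rule transfer_on_zero) (use mnle in \<open>force simp: supp_seq_def\<close>)
  finally show ?thesis using False by (simp add: transfer_def mn_def mx_def)
qed

lemma star_a: "z \<noteq> 0 \<Longrightarrow> frak_a_star z G = transfer G z $2$2"
  unfolding frak_a_star_def frak_a_def transfer_fo using fo_sym by metis

lemma star_b: "z \<noteq> 0 \<Longrightarrow> frak_b_star z G = transfer G z $1$2"
  unfolding frak_b_star_def frak_b_def transfer_fo using fo_sym by metis

lemma det_transfer: "\<forall>n. cmod (G n) < 1 \<Longrightarrow> z \<noteq> 0 \<Longrightarrow>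
  frak_a z G * frak_a_star z G - frak_b_star z G * frak_b z G = 1"
  using fo_det[of G z "LL G"] by (simp add: star_a star_b frak_a_def frak_b_def transfer_fo mult.commute)


lemma pos_lemma:
  fixes x y p q :: real
  assumes hx: "x^2 = 1 + y^2" and hp: "p^2 = 1 + q^2" and x0: "x \<ge> 0" and y0: "y \<ge> 0" and p0: "p \<ge> 0" and q0: "q \<ge> 0"
  shows "x*p - y*q > 0"
proof -
  have xy: "x > y" proof -
    have "y^2 < x^2" using hx by simp
    then show ?thesis using x0 y0 power_less_imp_less_base by blast
  qed
  have pq: "p > q" proof -
    have "q^2 < p^2" using hp by simp
    then show ?thesis using p0 q0 power_less_imp_less_base by blast
  qed
  have "x*p - y*q = (x-y)*p + y*(p-q)" by (simp add: algebra_simps)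
  moreover have "(x-y)*p > 0" using xy pq q0 by simp
  moreover have "y*(p-q) \<ge> 0" using y0 pq by simp
  ultimately show ?thesis by linarith
qed

lemma decomp:
  fixes F G :: "int \<Rightarrow> complex" and N1 N2 N M :: int and z :: complex
  assumes finF: "finite (supp_seq F)" and finG: "finite (supp_seq G)"
    and suppF: "supp_seq F \<subseteq> {..N1}" and suppG: "supp_seq G \<subseteq> {-N2..}"
    and hN: "N > N1 + N2" and hM: "M \<ge> -N2"
    and hz: "z \<noteq> 0"
  shows "transfer (\<lambda>n. F n + shift_seq (trunc_seq G M) N n) z =
     dmat z N ** transfer (trunc_seq G M) z ** dmat z (-N) ** transfer F z"
proof -
  define G' where "G' = trunc_seq G M"
  define S where "S = shift_seq G' N"
  define H where "H = (\<lambda>n. F n + S n)"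
  define lo where "lo = Min (insert N1 (supp_seq F))"
  have lo: "\<And>k. k \<in> supp_seq F \<Longrightarrow> lo \<le> k" "lo \<le> N1" using finF by (auto simp: lo_def)
  have suppFlo: "supp_seq F \<subseteq> {lo..N1}" using lo suppF by auto
  have G'0: "\<And>k. k < -N2 \<or> k > M \<Longrightarrow> G' k = 0"
    using suppG by (auto simp: G'_def trunc_seq_def supp_seq_def)
  have suppG': "supp_seq G' \<subseteq> {N1 + 1 - N..M}"
    using G'0 hN by (force simp: supp_seq_def)
  have finG': "finite (supp_seq G')"
    by (rule finite_subset[OF _ finG]) (auto simp: G'_def trunc_seq_def supp_seq_def)
  have S0: "\<And>k. k \<le> N1 \<Longrightarrow> S k = 0" using G'0 hN by (simp add: S_def shift_seq_def)
  have F0: "\<And>k. k > N1 \<Longrightarrow> F k = 0" using suppF by (force simp: supp_seq_def)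
  have suppH: "supp_seq H \<subseteq> {lo..M+N}"
  proof
    fix k assume "k \<in> supp_seq H"
    then have "F k \<noteq> 0 \<or> S k \<noteq> 0" by (auto simp: H_def supp_seq_def)
    then show "k \<in> {lo..M+N}"
    proof
      assume "F k \<noteq> 0" then show ?thesis using lo suppF hN hM by (force simp: supp_seq_def)
    next
      assume "S k \<noteq> 0" then have "G' (k - N) \<noteq> 0" by (simp add: S_def shift_seq_def)
      then show ?thesis using G'0[of "k-N"] lo hN by force
    qed
  qed
  have finH: "finite (supp_seq H)" by (rule finite_subset[OF suppH]) simp
  have "transfer H z = transfer_on H z lo (M+N)" by (rule transfer_eq[OF finH suppH])
  also have "\<dots> = transfer_on H z (N1+1) (M+N) ** transfer_on H z lo N1"
    using lo hN hM by (intro transfer_on_split) auto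
  also have "transfer_on H z lo N1 = transfer_on F z lo N1"
    by (rule transfer_on_cong) (simp add: H_def S0)
  also have "\<dots> = transfer F z" by (rule transfer_eq[OF finF suppFlo, symmetric])
  also have "transfer_on H z (N1+1) (M+N) = transfer_on S z (N1 + 1) (M+N)"
    by (rule transfer_on_cong) (simp add: H_def F0)
  also have "\<dots> = fo S z (map (\<lambda>k. k+N) [N1 + 1 - N..M])"
    using upto_shift[of "N1+1-N" N M] by (simp add: transfer_on_fo)
  also have "\<dots> = dmat z N ** transfer_on G' z (N1 + 1 - N) M ** dmat z (-N)"
    unfolding S_def transfer_on_fo by (rule fo_shift[OF hz])
  also have "transfer_on G' z (N1 + 1 - N) M = transfer G' z"
    by (rule transfer_eq[OF finG' suppG', symmetric])
  finally show ?thesis by (simp add: H_def S_def G'_def)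
qed

theorem lemma2p1:
  fixes F G :: "int \<Rightarrow> complex" and N1 N2 N M :: int and z :: complex
  assumes finF: "finite (supp_seq F)" and finG: "finite (supp_seq G)"
    and discF: "\<forall>n. cmod (F n) < 1" and discG: "\<forall>n. cmod (G n) < 1"
    and suppF: "supp_seq F \<subseteq> {..N1}" and suppG: "supp_seq G \<subseteq> {-N2..}"
    and hN: "N > N1 + N2" and hM: "M \<ge> -N2"
    and hz: "z \<noteq> 0"
  shows "(frak_a_star z (\<lambda>n. F n + shift_seq (trunc_seq G M) N n) =
           frak_a_star z F * frak_a_star z (trunc_seq G M)
           + z powi N * frak_b_star z F * frak_b z (trunc_seq G M))
    \<and> (frak_b z (\<lambda>n. F n + shift_seq (trunc_seq G M) N n) =
           z powi N * frak_b z (trunc_seq G M) * frak_a z F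
           + frak_b z F * frak_a_star z (trunc_seq G M))
    \<and> (cmod z = 1 \<longrightarrow>
         cmod (frak_r z (\<lambda>n. F n + shift_seq (trunc_seq G M) N n) - frak_r z F)
           \<le> cmod (frak_r z (trunc_seq G M)) / (1 - cmod (frak_r z (trunc_seq G M))))"
proof -
  define G' where "G' = trunc_seq G M"
  define H where "H = (\<lambda>n. F n + shift_seq (trunc_seq G M) N n)"
  have dec: "transfer H z = dmat z N ** transfer G' z ** dmat z (-N) ** transfer F z"
    unfolding H_def G'_def by (rule decomp[OF finF finG suppF suppG hN hM hz])
  have pc: "z powi N * z powi (-N) = 1" using hz by (simp add: power_int_minus)
  have E1: "frak_a_star z H = frak_a_star z F * frak_a_star z G' + z powi N * frak_b_star z F * frak_b z G'"
    unfolding star_a[OF hz] star_b[OF hz] frak_b_def dec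
    by (simp add: mult2 dmat_entries algebra_simps pc)
  have E2: "frak_b z H = z powi N * frak_b z G' * frak_a z F + frak_b z F * frak_a_star z G'"
    unfolding star_a[OF hz] frak_a_def frak_b_def dec
    by (simp add: mult2 dmat_entries algebra_simps pc)
  have E3: "cmod (frak_r z H - frak_r z F) \<le> cmod (frak_r z G') / (1 - cmod (frak_r z G'))"
    if z1: "cmod z = 1"
  proof -
    have zz: "z * cnj z = 1" using complex_norm_square[of z] z1 by simp
    have c0: "cnj z \<noteq> 0" using hz by simp
    have w: "1 / cnj z = z" using zz c0 by (simp add: field_simps)
    have sa: "\<And>Q. frak_a_star z Q = cnj (frak_a z Q)" by (simp add: frak_a_star_def w)
    have sb: "\<And>Q. frak_b_star z Q = cnj (frak_b z Q)" by (simp add: frak_b_star_def w)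
    have discG': "\<forall>n. cmod (G' n) < 1" using discG unfolding G'_def trunc_seq_def by auto
    define aF where "aF = frak_a z F"
    define bF where "bF = frak_b z F"
    define a where "a = frak_a z G'"
    define b where "b = frak_b z G'"
    have nrm: "\<And>u::complex. u * cnj u = complex_of_real ((cmod u)^2)"
      by (metis complex_norm_square of_real_power)
    have dF: "aF * cnj aF - bF * cnj bF = 1"
      using det_transfer[OF discF hz] by (simp add: sa sb aF_def bF_def mult.commute)
    have dG: "a * cnj a - b * cnj b = 1"
      using det_transfer[OF discG' hz] by (simp add: sa sb a_def b_def mult.commute)
    have nF: "(cmod aF)^2 = 1 + (cmod bF)^2"
    proof -
      have "complex_of_real ((cmod aF)^2 - (cmod bF)^2) = 1" using dF by (simp add: nrm)
      then show ?thesis by (metis eq_diff_eq' of_real_eq_1_iff add.commute)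
    qed
    have nG: "(cmod a)^2 = 1 + (cmod b)^2"
    proof -
      have "complex_of_real ((cmod a)^2 - (cmod b)^2) = 1" using dG by (simp add: nrm)
      then show ?thesis by (metis eq_diff_eq' of_real_eq_1_iff add.commute)
    qed
    define A where "A = cnj aF * cnj a + z powi N * cnj bF * b"
    define B where "B = z powi N * b * aF + bF * cnj a"
    have zN: "cmod (z powi N) = 1" using z1 by (simp add: norm_power_int)
    have Alow: "cmod A \<ge> cmod aF * cmod a - cmod bF * cmod b"
    proof -
      have "cmod (cnj aF * cnj a) - cmod (z powi N * cnj bF * b) \<le> cmod A"
        unfolding A_def by (rule norm_diff_ineq)
      then show ?thesis by (simp add: norm_mult zN)
    qed
    have ppos: "cmod aF * cmod a - cmod bF * cmod b > 0"
      by (rule pos_lemma[OF nF nG]) auto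
    have A0: "A \<noteq> 0"
    proof
      assume "A = 0" then have "cmod A = 0" by (simp only: norm_zero)
      then show False using Alow ppos by linarith
    qed
    have aF0: "cnj aF \<noteq> 0"
    proof
      assume "cnj aF = 0" then have "cmod aF = 0" by (simp only: complex_cnj_zero_iff norm_zero)
      then have "(cmod aF)^2 = 0" by (simp only: power_zero_numeral)
      moreover have "(cmod bF)^2 \<ge> 0" by (rule zero_le_power2)
      ultimately show False using nF by linarith
    qed
    have a0: "cnj a \<noteq> 0"
    proof
      assume "cnj a = 0" then have "cmod a = 0" by (simp only: complex_cnj_zero_iff norm_zero)
      then have "(cmod a)^2 = 0" by (simp only: power_zero_numeral)
      moreover have "(cmod b)^2 \<ge> 0" by (rule zero_le_power2)
      ultimately show False using nG by linarith
    qed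
    have rH: "frak_r z H = B / A" using E1 E2 by (simp add: frak_r_def A_def B_def sa sb aF_def bF_def a_def b_def)
    have rF: "frak_r z F = bF / cnj aF" by (simp add: frak_r_def sa aF_def bF_def)
    have rG: "frak_r z G' = b / cnj a" by (simp add: frak_r_def sa a_def b_def)
    have num: "B * cnj aF - bF * A = z powi N * b"
    proof -
      have "B * cnj aF - bF * A = z powi N * b * (aF * cnj aF - bF * cnj bF)"
        by (simp add: A_def B_def algebra_simps)
      then show ?thesis using dF by simp
    qed
    have "B / A - bF / cnj aF = (B * cnj aF - bF * A) / (A * cnj aF)"
      using A0 aF0 by (simp add: field_simps)
    also have "\<dots> = z powi N * b / (A * cnj aF)" by (simp add: num)
    finally have "cmod (frak_r z H - frak_r z F) = cmod b / (cmod A * cmod aF)"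
      by (simp add: rH rF norm_divide norm_mult zN)
    also have "\<dots> \<le> (cmod b / cmod a) / (1 - cmod b / cmod a)"
      by (rule key_ineq[OF nF nG _ _ _ _ Alow]) auto
    also have "\<dots> = cmod (frak_r z G') / (1 - cmod (frak_r z G'))"
      by (simp add: rG norm_divide)
    finally show ?thesis .
  qed
  show ?thesis using E1 E2 E3 unfolding H_def G'_def by blast
qed

end
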